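(* Let $\mathcal X\subseteq\mathcal P(\omega)$ be a family of nonempty sets and let $\mathcal Z\subseteq\mathcal P(\omega)$ be closed under supersets. Then the games $\mathfrak G(\mathcal X,\omega,\mathcal Z^c)$ and $\mathfrak G(\mathcal X,[\omega]^{<\omega},\mathcal Z^c)$ are equivalent: a player has a winning strategy in one game if and only if the same player has a winning strategy in the other.
   Context: $\mathcal Z^c=\mathcal P(\omega)\setminus\mathcal Z$. Game $\mathfrak G(\mathcal X,\omega,\mathcal W)$: at each stage $k\in\omega$, player I chooses $X_k\in\mathcal X$ and player II responds with $n_k\in X_k$; II wins if $\{n_k:k\in\omega\}\in\mathcal W$. Game $\mathfrak G(\mathcal X,[\omega]^{<\omega},\mathcal W)$: at each stage $k$, player I chooses $X_k\in\mathcal X$ and player II responds with a nonempty finite set $s_k\subseteq X_k$; II wins if $\bigcup_k s_k\in\mathcal W$. In each game I wins when II does not. *)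

theory Defs
  imports Main
begin

text \<open>Game G(X, omega, W): at stage k player I plays X_k in X, player II answers n_k in X_k;
II wins iff {n_k | k} in W.
A strategy for I maps the finite history of II's previous moves to I's next move;
a strategy for II maps the finite history of I's moves (X_0,...,X_k) to II's answer.\<close>

definition strategy_I_pt :: "nat set set \<Rightarrow> (nat list \<Rightarrow> nat set) \<Rightarrow> bool" where
  "strategy_I_pt \<X> \<sigma> \<longleftrightarrow> (\<forall>h. \<sigma> h \<in> \<X>)"

definition play_I_pt :: "(nat list \<Rightarrow> nat set) \<Rightarrow> (nat \<Rightarrow> nat) \<Rightarrow> bool" where
  "play_I_pt \<sigma> n \<longleftrightarrow> (\<forall>k. n k \<in> \<sigma> (map n [0..<k]))"

definition winning_I_pt :: "nat set set \<Rightarrow> nat set set \<Rightarrow> (nat list \<Rightarrow> nat set) \<Rightarrow> bool" where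
  "winning_I_pt \<X> \<W> \<sigma> \<longleftrightarrow> strategy_I_pt \<X> \<sigma> \<and>
     (\<forall>n. play_I_pt \<sigma> n \<longrightarrow> range n \<notin> \<W>)"

definition strategy_II_pt :: "nat set set \<Rightarrow> (nat set list \<Rightarrow> nat) \<Rightarrow> bool" where
  "strategy_II_pt \<X> \<tau> \<longleftrightarrow> (\<forall>xs. xs \<noteq> [] \<and> set xs \<subseteq> \<X> \<longrightarrow> \<tau> xs \<in> last xs)"

definition winning_II_pt :: "nat set set \<Rightarrow> nat set set \<Rightarrow> (nat set list \<Rightarrow> nat) \<Rightarrow> bool" where
  "winning_II_pt \<X> \<W> \<tau> \<longleftrightarrow> strategy_II_pt \<X> \<tau> \<and>
     (\<forall>x. (\<forall>k. x k \<in> \<X>) \<longrightarrow> range (\<lambda>k. \<tau> (map x [0..<Suc k])) \<in> \<W>)"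

text \<open>Game G(X, [omega]^<omega, W): II answers with a nonempty finite s_k \<subseteq> X_k;
II wins iff the union of the s_k is in W.\<close>

definition strategy_I_fin :: "nat set set \<Rightarrow> (nat set list \<Rightarrow> nat set) \<Rightarrow> bool" where
  "strategy_I_fin \<X> \<sigma> \<longleftrightarrow> (\<forall>h. \<sigma> h \<in> \<X>)"

definition play_I_fin :: "(nat set list \<Rightarrow> nat set) \<Rightarrow> (nat \<Rightarrow> nat set) \<Rightarrow> bool" where
  "play_I_fin \<sigma> s \<longleftrightarrow>
     (\<forall>k. s k \<noteq> {} \<and> finite (s k) \<and> s k \<subseteq> \<sigma> (map s [0..<k]))"

definition winning_I_fin :: "nat set set \<Rightarrow> nat set set \<Rightarrow> (nat set list \<Rightarrow> nat set) \<Rightarrow> bool" where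
  "winning_I_fin \<X> \<W> \<sigma> \<longleftrightarrow> strategy_I_fin \<X> \<sigma> \<and>
     (\<forall>s. play_I_fin \<sigma> s \<longrightarrow> (\<Union>k. s k) \<notin> \<W>)"

definition strategy_II_fin :: "nat set set \<Rightarrow> (nat set list \<Rightarrow> nat set) \<Rightarrow> bool" where
  "strategy_II_fin \<X> \<tau> \<longleftrightarrow> (\<forall>xs. xs \<noteq> [] \<and> set xs \<subseteq> \<X> \<longrightarrow>
      \<tau> xs \<noteq> {} \<and> finite (\<tau> xs) \<and> \<tau> xs \<subseteq> last xs)"

definition winning_II_fin :: "nat set set \<Rightarrow> nat set set \<Rightarrow> (nat set list \<Rightarrow> nat set) \<Rightarrow> bool" where
  "winning_II_fin \<X> \<W> \<tau> \<longleftrightarrow> strategy_II_fin \<X> \<tau> \<and>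
     (\<forall>x. (\<forall>k. x k \<in> \<X>) \<longrightarrow> (\<Union>k. \<tau> (map x [0..<Suc k])) \<in> \<W>)"

end

theory Submission
  imports Defs
begin

theorem lemma3p1:
  fixes \<X> \<Z> :: "nat set set"
  assumes "\<forall>A\<in>\<X>. A \<noteq> {}"
    and "\<forall>A B. A \<in> \<Z> \<and> A \<subseteq> B \<longrightarrow> B \<in> \<Z>"
  shows "((\<exists>\<sigma>. winning_I_pt \<X> (- \<Z>) \<sigma>) \<longleftrightarrow> (\<exists>\<sigma>. winning_I_fin \<X> (- \<Z>) \<sigma>))
       \<and> ((\<exists>\<tau>. winning_II_pt \<X> (- \<Z>) \<tau>) \<longleftrightarrow> (\<exists>\<tau>. winning_II_fin \<X> (- \<Z>) \<tau>))"
proof (intro conjI iffI)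
  have up: "A \<in> \<Z> \<Longrightarrow> A \<subseteq> B \<Longrightarrow> B \<in> \<Z>" for A B using assms(2) by blast
  define ch :: "nat set \<Rightarrow> nat" where "ch = (\<lambda>s. SOME x. x \<in> s)"
  have ch: "s \<noteq> {} \<Longrightarrow> ch s \<in> s" for s unfolding ch_def by (simp add: some_in_eq)
  {
    assume "\<exists>\<sigma>. winning_I_pt \<X> (- \<Z>) \<sigma>"
    then obtain \<sigma> where w: "winning_I_pt \<X> (- \<Z>) \<sigma>" by blast
    let ?s = "\<lambda>h. \<sigma> (map ch h)"
    have "winning_I_fin \<X> (- \<Z>) ?s"
      unfolding winning_I_fin_def strategy_I_fin_def
    proof (intro conjI allI impI)
      fix h show "?s h \<in> \<X>" using w unfolding winning_I_pt_def strategy_I_pt_def by blast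
    next
      fix s assume p: "play_I_fin ?s s"
      have "play_I_pt \<sigma> (ch \<circ> s)" unfolding play_I_pt_def
      proof
        fix k
        have "ch (s k) \<in> s k" using p ch unfolding play_I_fin_def by blast
        also have "\<dots> \<subseteq> \<sigma> (map ch (map s [0..<k]))" using p unfolding play_I_fin_def by blast
        finally show "(ch \<circ> s) k \<in> \<sigma> (map (ch \<circ> s) [0..<k])" by simp
      qed
      hence "range (ch \<circ> s) \<in> \<Z>" using w unfolding winning_I_pt_def by auto
      moreover have "range (ch \<circ> s) \<subseteq> (\<Union>k. s k)" using p ch unfolding play_I_fin_def by auto
      ultimately show "(\<Union>k. s k) \<notin> - \<Z>" using up by blast
    qed
    thus "\<exists>\<sigma>. winning_I_fin \<X> (- \<Z>) \<sigma>" by blast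
  }
  {
    assume "\<exists>\<sigma>. winning_I_fin \<X> (- \<Z>) \<sigma>"
    then obtain \<sigma> where w: "winning_I_fin \<X> (- \<Z>) \<sigma>" by blast
    let ?s = "\<lambda>h. \<sigma> (map (\<lambda>x. {x}) h)"
    have "winning_I_pt \<X> (- \<Z>) ?s"
      unfolding winning_I_pt_def strategy_I_pt_def
    proof (intro conjI allI impI)
      fix h show "?s h \<in> \<X>" using w unfolding winning_I_fin_def strategy_I_fin_def by blast
    next
      fix n assume p: "play_I_pt ?s n"
      have "play_I_fin \<sigma> (\<lambda>k. {n k})" using p unfolding play_I_fin_def play_I_pt_def
        by (simp add: comp_def)
      hence "(\<Union>k. {n k}) \<in> \<Z>" using w unfolding winning_I_fin_def by auto
      moreover have "(\<Union>k. {n k}) = range n" by auto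
      ultimately show "range n \<notin> - \<Z>" by simp
    qed
    thus "\<exists>\<sigma>. winning_I_pt \<X> (- \<Z>) \<sigma>" by blast
  }
  {
    assume "\<exists>\<tau>. winning_II_pt \<X> (- \<Z>) \<tau>"
    then obtain \<tau> where w: "winning_II_pt \<X> (- \<Z>) \<tau>" by blast
    have "winning_II_fin \<X> (- \<Z>) (\<lambda>xs. {\<tau> xs})"
      using w unfolding winning_II_fin_def strategy_II_fin_def winning_II_pt_def strategy_II_pt_def
    proof (intro conjI allI impI)
      fix x :: "nat \<Rightarrow> nat set" assume "\<forall>k. x k \<in> \<X>"
      hence "range (\<lambda>k. \<tau> (map x [0..<Suc k])) \<in> - \<Z>" using w unfolding winning_II_pt_def by blast
      moreover have "(\<Union>k. {\<tau> (map x [0..<Suc k])}) = range (\<lambda>k. \<tau> (map x [0..<Suc k]))" by auto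
      ultimately show "(\<Union>k. {\<tau> (map x [0..<Suc k])}) \<in> - \<Z>" by simp
    qed auto
    thus "\<exists>\<tau>. winning_II_fin \<X> (- \<Z>) \<tau>" by blast
  }
  {
    assume "\<exists>\<tau>. winning_II_fin \<X> (- \<Z>) \<tau>"
    then obtain \<tau> where w: "winning_II_fin \<X> (- \<Z>) \<tau>" by blast
    have "winning_II_pt \<X> (- \<Z>) (\<lambda>xs. ch (\<tau> xs))"
      unfolding winning_II_pt_def strategy_II_pt_def
    proof (intro conjI allI impI)
      fix xs :: "nat set list" assume a: "xs \<noteq> [] \<and> set xs \<subseteq> \<X>"
      hence "\<tau> xs \<noteq> {} \<and> \<tau> xs \<subseteq> last xs" using w unfolding winning_II_fin_def strategy_II_fin_def by blast
      thus "ch (\<tau> xs) \<in> last xs" using ch by blast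
    next
      fix x :: "nat \<Rightarrow> nat set" assume a: "\<forall>k. x k \<in> \<X>"
      hence u: "(\<Union>k. \<tau> (map x [0..<Suc k])) \<notin> \<Z>" using w unfolding winning_II_fin_def by blast
      have "\<tau> (map x [0..<Suc k]) \<noteq> {}" for k
      proof -
        have "map x [0..<Suc k] \<noteq> [] \<and> set (map x [0..<Suc k]) \<subseteq> \<X>" using a by auto
        thus ?thesis using w unfolding winning_II_fin_def strategy_II_fin_def by blast
      qed
      hence "range (\<lambda>k. ch (\<tau> (map x [0..<Suc k]))) \<subseteq> (\<Union>k. \<tau> (map x [0..<Suc k]))" using ch by blast
      thus "range (\<lambda>k. ch (\<tau> (map x [0..<Suc k]))) \<in> - \<Z>" using u up by blast
    qed
    thus "\<exists>\<tau>. winning_II_pt \<X> (- \<Z>) \<tau>" by blast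
  }
qed

end
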